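(* Let $H$ be a Kekul\'ean hexagonal system. For every integer $n\ge0$, the map $f$ is a bijection from the set of Clar covers of $H$ with exactly $n$ hexagons onto the set of induced subgraphs of $R(H)$ isomorphic to the $n$-cube $Q_n$.
   Context: A hexagonal system is a 2-connected finite plane graph in which every interior face is a regular hexagon of side length one; its hexagons are the boundaries of its interior faces; it is Kekul\'ean if it has a perfect matching. A Clar cover of $H$ is a spanning subgraph each of whose components is a hexagon of $H$ or a single edge. The resonance graph $R(H)$ has the perfect matchings of $H$ as vertices, two adjacent iff their symmetric difference is the edge set of a hexagon of $H$. For a Clar cover $C$, $f(C)$ denotes the subgraph of $R(H)$ induced by all perfect matchings $M$ of $H$ such that every hexagon component of $C$ is $M$-alternating and every single-edge component of $C$ belongs to $M$. *)

theory Defs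
  imports Main
begin

text \<open>Hexagonal systems are realised inside the hexagonal (honeycomb) lattice.
Hexagons (cells) of the lattice are indexed by axial coordinates in int x int;
two cells are adjacent (share an edge) iff their difference is one of six vectors.
A lattice vertex is a triangle of three pairwise adjacent cells (the three cells
meeting at that vertex); a lattice edge joins two vertices sharing two cells.\<close>

type_synonym cell = "int \<times> int"
type_synonym hvertex = "cell set"
type_synonym hedge = "hvertex set"

definition adj_cell :: "cell \<Rightarrow> cell \<Rightarrow> bool" where
  "adj_cell c d \<longleftrightarrow>
     (fst d - fst c, snd d - snd c) \<in> {(1,0),(0,1),(-1,1),(-1,0),(0,-1),(1,-1)}"

definition lattice_vertex :: "hvertex \<Rightarrow> bool" where
  "lattice_vertex v \<longleftrightarrow> card v = 3 \<and> (\<forall>c\<in>v. \<forall>d\<in>v. c \<noteq> d \<longrightarrow> adj_cell c d)"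

definition lattice_edge :: "hedge \<Rightarrow> bool" where
  "lattice_edge e \<longleftrightarrow>
     (\<exists>v w. e = {v, w} \<and> lattice_vertex v \<and> lattice_vertex w \<and> card (v \<inter> w) = 2)"

definition hex_vertices :: "cell \<Rightarrow> hvertex set" where
  "hex_vertices h = {v. lattice_vertex v \<and> h \<in> v}"

definition hex_edges :: "cell \<Rightarrow> hedge set" where
  "hex_edges h = {e. lattice_edge e \<and> (\<forall>v\<in>e. h \<in> v)}"

definition hs_vertices :: "cell set \<Rightarrow> hvertex set" where
  "hs_vertices S = (\<Union>h\<in>S. hex_vertices h)"

definition hs_edges :: "cell set \<Rightarrow> hedge set" where
  "hs_edges S = (\<Union>h\<in>S. hex_edges h)"

definition graph_connected :: "'v set \<Rightarrow> 'v set set \<Rightarrow> bool" where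
  "graph_connected V E \<longleftrightarrow> V \<noteq> {} \<and>
     (\<forall>u\<in>V. \<forall>w\<in>V. (u, w) \<in> {(x, y). x \<in> V \<and> y \<in> V \<and> {x, y} \<in> E}\<^sup>*)"

definition two_connected :: "'v set \<Rightarrow> 'v set set \<Rightarrow> bool" where
  "two_connected V E \<longleftrightarrow> finite V \<and> 3 \<le> card V \<and> graph_connected V E \<and>
     (\<forall>x\<in>V. graph_connected (V - {x}) {e\<in>E. x \<notin> e})"

text \<open>A hexagonal system, given by its set S of hexagons: S is finite, the graph it
spans is 2-connected, and the cells outside S form a single (infinite) connected region,
so that the interior faces of the graph are exactly the hexagons in S.\<close>
definition hexagonal_system :: "cell set \<Rightarrow> bool" where
  "hexagonal_system S \<longleftrightarrow> finite S \<and> S \<noteq> {} \<and>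
     two_connected (hs_vertices S) (hs_edges S) \<and>
     (\<forall>c d. c \<notin> S \<longrightarrow> d \<notin> S \<longrightarrow>
        (c, d) \<in> {(x, y). x \<notin> S \<and> y \<notin> S \<and> adj_cell x y}\<^sup>*)"

definition perfect_matching :: "cell set \<Rightarrow> hedge set \<Rightarrow> bool" where
  "perfect_matching S M \<longleftrightarrow> M \<subseteq> hs_edges S \<and>
     (\<forall>v\<in>hs_vertices S. \<exists>!e. e \<in> M \<and> v \<in> e)"

definition kekulean :: "cell set \<Rightarrow> bool" where
  "kekulean S \<longleftrightarrow> (\<exists>M. perfect_matching S M)"

definition alternating :: "hedge set \<Rightarrow> cell \<Rightarrow> bool" where
  "alternating M h \<longleftrightarrow> (\<forall>e\<in>hex_edges h. \<forall>e'\<in>hex_edges h.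
      e \<noteq> e' \<and> e \<inter> e' \<noteq> {} \<longrightarrow> (e \<in> M \<longleftrightarrow> e' \<notin> M))"

text \<open>A Clar cover, described by its set K of hexagon components and its set F of
single-edge components: these pieces are pairwise vertex-disjoint and cover all vertices.
(The spanning subgraph is the one with edge set hex_edges of K together with F.)\<close>
definition clar_cover :: "cell set \<Rightarrow> cell set \<Rightarrow> hedge set \<Rightarrow> bool" where
  "clar_cover S K F \<longleftrightarrow> K \<subseteq> S \<and> F \<subseteq> hs_edges S \<and>
     (\<forall>h\<in>K. \<forall>h'\<in>K. h \<noteq> h' \<longrightarrow> hex_vertices h \<inter> hex_vertices h' = {}) \<and>
     (\<forall>e\<in>F. \<forall>e'\<in>F. e \<noteq> e' \<longrightarrow> e \<inter> e' = {}) \<and>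
     (\<forall>e\<in>F. \<forall>h\<in>K. e \<inter> hex_vertices h = {}) \<and>
     (\<Union>h\<in>K. hex_vertices h) \<union> \<Union>F = hs_vertices S"

definition res_adj :: "cell set \<Rightarrow> hedge set \<Rightarrow> hedge set \<Rightarrow> bool" where
  "res_adj S M M' \<longleftrightarrow> (\<exists>h\<in>S. (M - M') \<union> (M' - M) = hex_edges h)"

definition f_set :: "cell set \<Rightarrow> cell set \<Rightarrow> hedge set \<Rightarrow> hedge set set" where
  "f_set S K F = {M. perfect_matching S M \<and> (\<forall>h\<in>K. alternating M h) \<and> F \<subseteq> M}"

definition cube_vertices :: "nat \<Rightarrow> nat set set" where
  "cube_vertices n = Pow {..<n}"

definition cube_adj :: "nat set \<Rightarrow> nat set \<Rightarrow> bool" where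
  "cube_adj A B \<longleftrightarrow> card ((A - B) \<union> (B - A)) = 1"

definition graph_iso :: "'a set \<Rightarrow> ('a \<Rightarrow> 'a \<Rightarrow> bool) \<Rightarrow> 'b set \<Rightarrow> ('b \<Rightarrow> 'b \<Rightarrow> bool) \<Rightarrow> bool" where
  "graph_iso V1 adj1 V2 adj2 \<longleftrightarrow>
     (\<exists>\<phi>. bij_betw \<phi> V1 V2 \<and> (\<forall>x\<in>V1. \<forall>y\<in>V1. adj1 x y \<longleftrightarrow> adj2 (\<phi> x) (\<phi> y)))"

end

theory Submission
  imports Defs
begin


definition off :: "nat \<Rightarrow> int \<times> int" where
  "off k = [(1,0),(0,1),(-1,1),(-1,0),(0,-1),(1,-1)] ! (k mod 6)"

definition nb :: "cell \<Rightarrow> nat \<Rightarrow> cell" where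
  "nb h k = (fst h + fst (off k), snd h + snd (off k))"

definition V :: "cell \<Rightarrow> nat \<Rightarrow> hvertex" where
  "V h k = {h, nb h k, nb h (Suc k)}"

definition Ed :: "cell \<Rightarrow> nat \<Rightarrow> hedge" where
  "Ed h k = {V h k, V h (Suc k)}"

lemma six_cases: "(k::nat) < 6 \<Longrightarrow> k = 0 \<or> k = 1 \<or> k = 2 \<or> k = 3 \<or> k = 4 \<or> k = 5"
  by auto

lemma nb_mod: "nb h (k mod 6) = nb h k"
  by (simp add: nb_def off_def)

lemma V_mod: "V h (k mod 6) = V h k"
  by (simp add: V_def nb_def off_def mod_Suc_eq)

lemma Ed_mod: "Ed h (k mod 6) = Ed h k"
  by (metis Ed_def V_mod mod_Suc_eq)

lemma ex6: "(\<exists>k<6. P k) \<longleftrightarrow> P 0 \<or> P 1 \<or> P 2 \<or> P 3 \<or> P 4 \<or> P (5::nat)"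
proof
  assume "\<exists>k<6. P k" then obtain k where "k < 6" "P k" by blast
  then show "P 0 \<or> P 1 \<or> P 2 \<or> P 3 \<or> P 4 \<or> P (5::nat)" using six_cases[of k] by auto
next
  assume "P 0 \<or> P 1 \<or> P 2 \<or> P 3 \<or> P 4 \<or> P (5::nat)"
  then show "\<exists>k<6. P k"
  proof (elim disjE)
    assume "P 0" then show ?thesis by (intro exI[where x=0]) simp
  next
    assume "P 1" then show ?thesis by (intro exI[where x=1]) simp
  next
    assume "P 2" then show ?thesis by (intro exI[where x=2]) simp
  next
    assume "P 3" then show ?thesis by (intro exI[where x=3]) simp
  next
    assume "P 4" then show ?thesis by (intro exI[where x=4]) simp
  next
    assume "P 5" then show ?thesis by (intro exI[where x=5]) simp
  qed
qed

lemma all6: "(\<forall>k<6. P k) \<longleftrightarrow> P 0 \<and> P 1 \<and> P 2 \<and> P 3 \<and> P 4 \<and> P (5::nat)"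
  using ex6[of "\<lambda>k. \<not> P k"] by blast

lemma adj_cell_iff: "adj_cell c d \<longleftrightarrow> (\<exists>k<6. d = nb c k)"
  unfolding ex6 by (cases c; cases d) (auto simp: adj_cell_def nb_def off_def)

lemma off_pair:
  fixes u v s t :: int
  assumes "(u,v) \<in> {(1,0),(0,1),(-1,1),(-1,0),(0,-1),(1,-1)}" "(s,t) \<in> {(1,0),(0,1),(-1,1),(-1,0),(0,-1),(1,-1)}" "(s-u,t-v) \<in> {(1,0),(0,1),(-1,1),(-1,0),(0,-1),(1,-1)}"
  shows "((u,v),(s,t)) \<in> {((1,0),(0,1)),((0,1),(1,0)),((0,1),(-1,1)),((-1,1),(0,1)),((-1,1),(-1,0)),((-1,0),(-1,1)),((-1,0),(0,-1)),((0,-1),(-1,0)),((0,-1),(1,-1)),((1,-1),(0,-1)),((1,-1),(1,0)),((1,0),(1,-1))}"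
  using assms(1,2)
  apply (simp only: insert_iff singleton_iff empty_iff prod.inject)
  apply (elim disjE conjE)
  using assms(3) by simp_all

lemma adj_pair:
  assumes "adj_cell h a" "adj_cell h b" "adj_cell a b"
  shows "\<exists>k<6. (a = nb h k \<and> b = nb h (Suc k)) \<or> (b = nb h k \<and> a = nb h (Suc k))"
proof -
  obtain p q where h: "h = (p,q)" by (cases h)
  obtain x y where a: "a = (x,y)" by (cases a)
  obtain z w where b: "b = (z,w)" by (cases b)
  have 1: "(x-p,y-q) \<in> {(1,0),(0,1),(-1,1),(-1,0),(0,-1),(1,-1)}" using assms(1) by (simp add: adj_cell_def h a)
  have 2: "(z-p,w-q) \<in> {(1,0),(0,1),(-1,1),(-1,0),(0,-1),(1,-1)}" using assms(2) by (simp add: adj_cell_def h b)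
  have 3: "((z-p)-(x-p),(w-q)-(y-q)) \<in> {(1,0),(0,1),(-1,1),(-1,0),(0,-1),(1,-1)}" using assms(3) by (simp add: adj_cell_def a b)
  have "x = p + (x-p)" "y = q + (y - q)" "z = p + (z-p)" "w = q + (w-q)" by simp_all
  then show ?thesis using off_pair[OF 1 2 3] unfolding h a b ex6
    by (simp add: nb_def off_def) (elim disjE; simp)
qed

lemma V_lv0: "k < 6 \<Longrightarrow> lattice_vertex (V h k)"
  apply (cases h)
  apply (drule six_cases)
  apply (elim disjE)
  apply (simp_all add: lattice_vertex_def V_def nb_def off_def adj_cell_def)
  done

lemma V_lv: "lattice_vertex (V h k)"
  using V_lv0[of "k mod 6" h] by (simp add: V_mod)

lemma VV_card: "i < 6 \<Longrightarrow> j < 6 \<Longrightarrow> card (V h i \<inter> V h j) = 2 \<Longrightarrow> j = Suc i mod 6 \<or> i = Suc j mod 6"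
  apply (cases h)
  apply (drule six_cases)+
  apply (elim disjE)
  apply (simp_all add: V_def nb_def off_def)
  done

lemma nb_eq: "nb h a = nb h b \<longleftrightarrow> a mod 6 = b mod 6"
proof -
  have "a mod 6 < 6" "b mod 6 < 6" by auto
  then have "nb h (a mod 6) = nb h (b mod 6) \<longleftrightarrow> a mod 6 = b mod 6"
    using six_cases[of "a mod 6"] six_cases[of "b mod 6"]
    by (cases h) (auto simp: nb_def off_def)
  then show ?thesis by (simp add: nb_mod)
qed

lemma nb_ne: "nb h k \<noteq> h"
proof -
  have "nb h (k mod 6) \<noteq> h" using six_cases[of "k mod 6"]
    by (cases h) (auto simp: nb_def off_def)
  then show ?thesis by (simp add: nb_mod)
qed

lemma m6: "(\<And>x::nat. x < 6 \<Longrightarrow> P x (Suc x mod 6)) \<Longrightarrow> P (i mod 6) (Suc i mod 6)"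
  by (metis mod_Suc_eq mod_less_divisor zero_less_numeral)

lemma sm_inj: "Suc i mod 6 = Suc j mod 6 \<Longrightarrow> (i::nat) mod 6 = j mod 6"
proof -
  have "\<And>x y::nat. x < 6 \<Longrightarrow> y < 6 \<Longrightarrow> Suc x mod 6 = Suc y mod 6 \<Longrightarrow> x = y"
    by (drule six_cases)+ (elim disjE; simp)
  then show "Suc i mod 6 = Suc j mod 6 \<Longrightarrow> i mod 6 = j mod 6"
    by (metis mod_Suc_eq mod_less_divisor zero_less_numeral)
qed

lemma mod6_ne: "(a::nat) mod 6 = b mod 6 \<Longrightarrow> Suc a mod 6 = b mod 6 \<Longrightarrow> False"
proof -
  have "\<And>x::nat. x < 6 \<Longrightarrow> Suc x mod 6 = x \<Longrightarrow> False"
    by (drule six_cases) (elim disjE; simp)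
  then show "(a::nat) mod 6 = b mod 6 \<Longrightarrow> Suc a mod 6 = b mod 6 \<Longrightarrow> False"
    by (metis mod_Suc_eq mod_less_divisor zero_less_numeral)
qed

lemma mod6_ne2: "Suc (Suc a) mod 6 = (a::nat) mod 6 \<Longrightarrow> False"
proof -
  have "\<And>x::nat. x < 6 \<Longrightarrow> Suc (Suc x) mod 6 = x \<Longrightarrow> False"
    by (drule six_cases) (elim disjE; simp)
  then show "Suc (Suc a) mod 6 = (a::nat) mod 6 \<Longrightarrow> False"
    by (metis mod_Suc_eq mod_less_divisor zero_less_numeral)
qed

lemma k5: "Suc (k + 5) mod 6 = (k::nat) mod 6"
proof -
  have "Suc (k + 5) = k + 6" by simp
  then show ?thesis by (simp only: mod_add_self2)
qed

lemma m6two: "(\<And>x y::nat. x < 6 \<Longrightarrow> y < 6 \<Longrightarrow> P x (Suc x mod 6) y (Suc y mod 6)) \<Longrightarrow> P (i mod 6) (Suc i mod 6) (j mod 6) (Suc j mod 6)"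
  by (metis mod_Suc_eq mod_less_divisor zero_less_numeral)

lemma V_eq: "V h i = V h j \<longleftrightarrow> i mod 6 = j mod 6"
proof
  assume e: "V h i = V h j"
  have "nb h i \<in> V h j" "nb h (Suc i) \<in> V h j" using e by (auto simp: V_def)
  then have 1: "i mod 6 = j mod 6 \<or> i mod 6 = Suc j mod 6" and 2: "Suc i mod 6 = j mod 6 \<or> Suc i mod 6 = Suc j mod 6"
    by (auto simp: V_def nb_eq nb_ne nb_ne[symmetric])
  have "\<And>x y::nat. x < 6 \<Longrightarrow> y < 6 \<Longrightarrow> (x = y \<or> x = Suc y mod 6) \<longrightarrow> (Suc x mod 6 = y \<or> Suc x mod 6 = Suc y mod 6) \<longrightarrow> x = y"
    by (drule six_cases)+ (elim disjE; simp)
  from m6two[where P="\<lambda>a b c d. (a = c \<or> a = d) \<longrightarrow> (b = c \<or> b = d) \<longrightarrow> a = c", OF this]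
  show "i mod 6 = j mod 6" using 1 2 by blast
next
  assume "i mod 6 = j mod 6"
  then show "V h i = V h j" by (metis V_mod)
qed

lemma VV_int: "V h k \<inter> V h (Suc k) = {h, nb h (Suc k)}"
proof -
  have "V h (k mod 6) \<inter> V h (Suc (k mod 6)) = {h, nb h (Suc (k mod 6))}"
    using six_cases[of "k mod 6"] by (cases h) (auto simp: V_def nb_def off_def)
  moreover have "V h (Suc (k mod 6)) = V h (Suc k)" "nb h (Suc (k mod 6)) = nb h (Suc k)"
    by (simp_all add: V_eq nb_eq mod_Suc_eq)
  ultimately show ?thesis by (simp add: V_mod)
qed

lemma Ed_le: "lattice_edge (Ed h k)"
  unfolding lattice_edge_def Ed_def using V_lv VV_int nb_ne
  by (metis card_2_iff)

lemma hexv: "hex_vertices h = V h ` {..<6}"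
proof (rule set_eqI, rule iffI)
  fix v assume "v \<in> hex_vertices h"
  then have lv: "lattice_vertex v" and hv: "h \<in> v" by (auto simp: hex_vertices_def)
  then obtain x y z where v: "v = {x,y,z}" "x \<noteq> y" "y \<noteq> z" "x \<noteq> z"
    by (auto simp: lattice_vertex_def card_3_iff)
  consider "h = x" | "h = y" | "h = z" using hv v by auto
  then obtain a b where ab: "v = {h,a,b}" "a \<noteq> h" "b \<noteq> h" "a \<noteq> b"
  proof cases
    case 1 then show ?thesis using that[of y z] v by blast
  next
    case 2 then show ?thesis using that[of x z] v by blast
  next
    case 3 then show ?thesis using that[of x y] v by blast
  qed
  have "adj_cell h a" "adj_cell h b" "adj_cell a b" using lv ab by (auto simp: lattice_vertex_def)
  from adj_pair[OF this] obtain k where "k < 6" "(a = nb h k \<and> b = nb h (Suc k)) \<or> (b = nb h k \<and> a = nb h (Suc k))"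
    by blast
  then have "v = V h k" "k < 6" using ab unfolding V_def by blast+
  then show "v \<in> V h ` {..<6}" by auto
next
  fix v assume "v \<in> V h ` {..<6}"
  then show "v \<in> hex_vertices h" by (auto simp: hex_vertices_def V_lv) (simp add: V_def)
qed

lemma V_in_hexv: "V h k \<in> hex_vertices h"
  by (simp add: hex_vertices_def V_lv) (simp add: V_def)

lemma hexe: "hex_edges h = Ed h ` {..<6}"
proof (rule set_eqI, rule iffI)
  fix e assume "e \<in> hex_edges h"
  then have le: "lattice_edge e" and he: "\<forall>v\<in>e. h \<in> v" by (auto simp: hex_edges_def)
  then obtain v w where e: "e = {v,w}" "lattice_vertex v" "lattice_vertex w" "card (v \<inter> w) = 2"
    by (auto simp: lattice_edge_def)
  have "v \<in> hex_vertices h" "w \<in> hex_vertices h" using e he by (auto simp: hex_vertices_def)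
  then obtain i j where ij: "i < 6" "j < 6" "v = V h i" "w = V h j" by (auto simp: hexv)
  from VV_card[OF ij(1,2)] e(4) ij have "j = Suc i mod 6 \<or> i = Suc j mod 6" by simp
  then have "e = Ed h i \<or> e = Ed h j"
    using e(1) ij by (auto simp: Ed_def V_mod insert_commute)
  then show "e \<in> Ed h ` {..<6}" using ij by auto
next
  fix e assume "e \<in> Ed h ` {..<6}"
  then show "e \<in> hex_edges h" by (auto simp: hex_edges_def Ed_le) (auto simp: Ed_def V_def)
qed

lemma Ed_in_hexe: "Ed h k \<in> hex_edges h"
  by (simp add: hex_edges_def Ed_le) (auto simp: Ed_def V_def)

lemma Ed_cells: "(\<forall>v\<in>Ed h k. c \<in> v) \<longleftrightarrow> c = h \<or> c = nb h (Suc k)"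
  using VV_int[of h k] by (auto simp: Ed_def V_def)

lemma Ed_eq: "Ed h i = Ed h j \<longleftrightarrow> i mod 6 = j mod 6"
proof
  assume e: "Ed h i = Ed h j"
  have "\<forall>v\<in>Ed h i. nb h (Suc j) \<in> v" using e Ed_cells[of h j "nb h (Suc j)"] by simp
  then have "nb h (Suc j) = h \<or> nb h (Suc j) = nb h (Suc i)" using Ed_cells by blast
  then have "Suc j mod 6 = Suc i mod 6" using nb_ne nb_eq by metis
  then show "i mod 6 = j mod 6" using sm_inj by metis
next
  assume "i mod 6 = j mod 6" then show "Ed h i = Ed h j" by (metis Ed_mod)
qed

lemma Ed_nb: "Ed h k \<in> hex_edges (nb h (Suc k))"
  using Ed_cells[of h k "nb h (Suc k)"] by (simp add: hex_edges_def Ed_le)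

lemma finite_hexe[simp]: "finite (hex_edges h)" by (simp add: hexe)

lemma card_hexe: "card (hex_edges h) = 6"
proof -
  have "inj_on (Ed h) {..<6}" by (auto simp: inj_on_def Ed_eq)
  then show ?thesis by (simp add: hexe card_image)
qed

lemma hexe_ne: "hex_edges h \<noteq> {}" using card_hexe[of h] by auto

lemma edge_sub: "e \<in> hex_edges h \<Longrightarrow> e \<subseteq> hex_vertices h"
  by (auto simp: hex_edges_def hex_vertices_def lattice_edge_def)

lemma edge_ne: "e \<in> hex_edges h \<Longrightarrow> e \<noteq> {}"
  by (auto simp: hex_edges_def lattice_edge_def)

lemma hexe_inter_eq: "a \<noteq> b \<Longrightarrow> e1 \<in> hex_edges a \<Longrightarrow> e1 \<in> hex_edges b \<Longrightarrow> e2 \<in> hex_edges a \<Longrightarrow> e2 \<in> hex_edges b \<Longrightarrow> e1 = e2"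
proof -
  assume ab: "a \<noteq> b" and 1: "e1 \<in> hex_edges a" "e1 \<in> hex_edges b" and 2: "e2 \<in> hex_edges a" "e2 \<in> hex_edges b"
  obtain i where i: "e1 = Ed a i" using 1 by (auto simp: hexe)
  obtain j where j: "e2 = Ed a j" using 2 by (auto simp: hexe)
  have "\<forall>v\<in>Ed a i. b \<in> v" using 1(2) unfolding i hex_edges_def by blast
  then have bi: "b = nb a (Suc i)" using ab Ed_cells[of a i b] by blast
  have "\<forall>v\<in>Ed a j. b \<in> v" using 2(2) unfolding j hex_edges_def by blast
  then have bj: "b = nb a (Suc j)" using ab Ed_cells[of a j b] by blast
  from bi bj have "nb a (Suc i) = nb a (Suc j)" by simp
  then have "Suc i mod 6 = Suc j mod 6" by (simp only: nb_eq)
  then have "i mod 6 = j mod 6" by (rule sm_inj)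
  then show ?thesis using i j by (simp add: Ed_eq)
qed

lemma hexe_inter: "a \<noteq> b \<Longrightarrow> card (hex_edges a \<inter> hex_edges b) \<le> 1"
proof -
  assume ab: "a \<noteq> b"
  have "card (hex_edges a \<inter> hex_edges b) \<le> Suc 0"
    using hexe_inter_eq[OF ab] by (subst card_le_Suc0_iff_eq) auto
  then show ?thesis by simp
qed

lemma hexe_inj: "hex_edges a = hex_edges b \<Longrightarrow> a = b"
  using hexe_inter[of a b] card_hexe[of a] by fastforce

lemma share_vertex:
  assumes "a \<noteq> b" "v \<in> hex_vertices a" "v \<in> hex_vertices b"
  shows "hex_edges a \<inter> hex_edges b \<noteq> {}"
proof -
  obtain k where k: "v = V a k" using assms(2) by (auto simp: hexv)
  have "b \<in> v" using assms(3) by (auto simp: hex_vertices_def)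
  then have "b = nb a k \<or> b = nb a (Suc k)" using assms(1) k by (auto simp: V_def)
  then obtain m where m: "b = nb a (Suc m)"
  proof
    assume "b = nb a k"
    moreover have "nb a k = nb a (Suc (k + 5))" by (simp only: nb_eq k5)
    ultimately show ?thesis using that by blast
  qed (use that in blast)
  then have "Ed a m \<in> hex_edges b" using Ed_nb by simp
  then show ?thesis using Ed_in_hexe[of a m] by blast
qed

lemma V_in_Ed: "V h i \<in> Ed h m \<longleftrightarrow> i mod 6 = m mod 6 \<or> i mod 6 = Suc m mod 6"
  by (auto simp: Ed_def V_eq)

definition ev :: "cell \<Rightarrow> hedge set" where "ev h = {Ed h 0, Ed h 2, Ed h 4}"
definition od :: "cell \<Rightarrow> hedge set" where "od h = {Ed h 1, Ed h 3, Ed h 5}"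

lemma ev_od_un: "ev h \<union> od h = hex_edges h"
proof -
  have "{..<6::nat} = {0,1,2,3,4,5}" by auto
  then show ?thesis by (auto simp: ev_def od_def hexe)
qed

lemma ev_od_int: "ev h \<inter> od h = {}"
  by (auto simp: ev_def od_def Ed_eq)

lemma card_ev: "card (ev h) = 3" by (simp add: ev_def Ed_eq)
lemma card_od: "card (od h) = 3" by (simp add: od_def Ed_eq)

lemma Ed_meet:
  assumes "Ed h i \<inter> Ed h j \<noteq> {}" "Ed h i \<noteq> Ed h j"
  shows "even (i mod 6) \<longleftrightarrow> odd (j mod 6)"
proof -
  have "i mod 6 \<noteq> j mod 6" using assms(2) by (simp add: Ed_eq)
  moreover from assms(1) have "i mod 6 = j mod 6 \<or> i mod 6 = Suc j mod 6 \<or> Suc i mod 6 = j mod 6 \<or> Suc i mod 6 = Suc j mod 6"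
    by (auto simp: Ed_def V_eq)
  moreover have "\<And>x y::nat. x < 6 \<Longrightarrow> y < 6 \<Longrightarrow> x \<noteq> y \<longrightarrow> (x = y \<or> x = Suc y mod 6 \<or> Suc x mod 6 = y \<or> Suc x mod 6 = Suc y mod 6) \<longrightarrow> (even x \<longleftrightarrow> odd y)"
    by (drule six_cases)+ (elim disjE; simp)
  ultimately show ?thesis
    using m6two[where P="\<lambda>a b c d. a \<noteq> c \<longrightarrow> (a = c \<or> a = d \<or> b = c \<or> b = d) \<longrightarrow> (even a \<longleftrightarrow> odd c)"] by blast
qed

lemma Ed_consec: "Ed h k \<noteq> Ed h (Suc k)" "Ed h k \<inter> Ed h (Suc k) \<noteq> {}"
  unfolding Ed_eq using mod6_ne[of k k] apply auto[1]
  unfolding Ed_def by auto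

lemma alt_step: "alternating M h \<Longrightarrow> Ed h (Suc k) \<in> M \<longleftrightarrow> Ed h k \<notin> M"
  unfolding alternating_def using Ed_consec[of h k] Ed_in_hexe by blast

lemma alt_cases:
  assumes "alternating M h"
  shows "M \<inter> hex_edges h = ev h \<or> M \<inter> hex_edges h = od h"
proof -
  have s: "\<And>k. Ed h (Suc k) \<in> M \<longleftrightarrow> Ed h k \<notin> M" using alt_step[OF assms] by blast
  have e: "hex_edges h = {Ed h 0, Ed h 1, Ed h 2, Ed h 3, Ed h 4, Ed h 5}"
  proof -
    have "{..<6::nat} = {0,1,2,3,4,5}" by auto
    then show ?thesis by (simp add: hexe)
  qed
  have s1: "Ed h 1 \<in> M \<longleftrightarrow> Ed h 0 \<notin> M" using s[of 0] by simp
  have s2: "Ed h 2 \<in> M \<longleftrightarrow> Ed h 1 \<notin> M" using s[of 1] by (simp add: numeral_2_eq_2)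
  have s3: "Ed h 3 \<in> M \<longleftrightarrow> Ed h 2 \<notin> M" using s[of 2] by (simp add: numeral_3_eq_3)
  have s4: "Ed h 4 \<in> M \<longleftrightarrow> Ed h 3 \<notin> M" using s[of 3] by (simp add: eval_nat_numeral)
  have s5: "Ed h 5 \<in> M \<longleftrightarrow> Ed h 4 \<notin> M" using s[of 4] by (simp add: eval_nat_numeral)
  show ?thesis
  proof (cases "Ed h 0 \<in> M")
    case True
    then have "M \<inter> hex_edges h = ev h" using s1 s2 s3 s4 s5 unfolding e ev_def by auto
    then show ?thesis by simp
  next
    case False
    then have "M \<inter> hex_edges h = od h" using s1 s2 s3 s4 s5 unfolding e od_def by auto
    then show ?thesis by simp
  qed
qed

lemma alt_intro:
  assumes "M \<inter> hex_edges h = ev h \<or> M \<inter> hex_edges h = od h"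
  shows "alternating M h"
  unfolding alternating_def
proof (intro ballI impI)
  fix e e' assume ee: "e \<in> hex_edges h" "e' \<in> hex_edges h" "e \<noteq> e' \<and> e \<inter> e' \<noteq> {}"
  obtain i j where ij: "e = Ed h i" "e' = Ed h j" "i < 6" "j < 6" using ee by (auto simp: hexe)
  have p: "even i \<longleftrightarrow> odd j" using Ed_meet[of h i j] ee ij by simp
  have evm: "Ed h k \<in> ev h \<longleftrightarrow> even k" if "k < 6" for k
    using that six_cases[of k] by (auto simp: ev_def Ed_eq)
  have odm: "Ed h k \<in> od h \<longleftrightarrow> odd k" if "k < 6" for k
    using that six_cases[of k] by (auto simp: od_def Ed_eq)
  from assms show "e \<in> M \<longleftrightarrow> e' \<notin> M"
  proof
    assume a: "M \<inter> hex_edges h = ev h"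
    have "e \<in> M \<longleftrightarrow> even i" "e' \<in> M \<longleftrightarrow> even j" using a evm ij ee by blast+
    then show ?thesis using p by blast
  next
    assume a: "M \<inter> hex_edges h = od h"
    have "e \<in> M \<longleftrightarrow> odd i" "e' \<in> M \<longleftrightarrow> odd j" using a odm ij ee by blast+
    then show ?thesis using p by blast
  qed
qed

lemma ev_cover: "v \<in> hex_vertices h \<Longrightarrow> \<exists>e\<in>ev h. v \<in> e"
proof -
  assume "v \<in> hex_vertices h"
  then obtain i where "v = V h i" "i < 6" by (auto simp: hexv)
  then show ?thesis using six_cases[of i] by (auto simp: ev_def Ed_def V_eq)
qed

lemma od_cover: "v \<in> hex_vertices h \<Longrightarrow> \<exists>e\<in>od h. v \<in> e"
proof -
  assume "v \<in> hex_vertices h"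
  then obtain i where "v = V h i" "i < 6" by (auto simp: hexv)
  then show ?thesis using six_cases[of i] by (auto simp: od_def Ed_def V_eq)
qed

lemma ev_disj:
  assumes "e \<in> ev h" "e' \<in> ev h" "e \<noteq> e'"
  shows "e \<inter> e' = {}"
proof (rule ccontr)
  assume ne: "e \<inter> e' \<noteq> {}"
  from assms(1,2) obtain i j where ij: "e = Ed h i" "e' = Ed h j" "i \<in> {0,2,4}" "j \<in> {0,2,4}"
    unfolding ev_def by blast
  then have "even (i mod 6) \<longleftrightarrow> odd (j mod 6)" using Ed_meet[of h i j] ne assms(3) by simp
  then show False using ij(3,4) by auto
qed

lemma od_disj:
  assumes "e \<in> od h" "e' \<in> od h" "e \<noteq> e'"
  shows "e \<inter> e' = {}"
proof (rule ccontr)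
  assume ne: "e \<inter> e' \<noteq> {}"
  from assms(1,2) obtain i j where ij: "e = Ed h i" "e' = Ed h j" "i \<in> {1,3,5}" "j \<in> {1,3,5}"
    unfolding od_def by blast
  then have "even (i mod 6) \<longleftrightarrow> odd (j mod 6)" using Ed_meet[of h i j] ne assms(3) by simp
  then show False using ij(3,4) by auto
qed



definition sd :: "'a set \<Rightarrow> 'a set \<Rightarrow> 'a set" where "sd A B = (A - B) \<union> (B - A)"

lemma sd_comm: "sd A B = sd B A" by (auto simp: sd_def)
lemma sd_assoc: "sd (sd A B) C = sd A (sd B C)" by (auto simp: sd_def)
lemma sd_self: "sd A A = {}" by (auto simp: sd_def)
lemma sd_empty[simp]: "sd A {} = A" "sd {} A = A" by (auto simp: sd_def)
lemma sd_cancel: "sd A (sd A B) = B" by (auto simp: sd_def)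
lemma sd_disj: "A \<inter> B = {} \<Longrightarrow> sd A B = A \<union> B" by (auto simp: sd_def)
lemma sd_eq_iff: "sd A B = C \<longleftrightarrow> B = sd A C" by (auto simp: sd_def)

lemma res_adj_sd: "res_adj S M M' \<longleftrightarrow> (\<exists>h\<in>S. sd M M' = hex_edges h)"
  by (simp add: res_adj_def sd_def)

lemma hs_edge_sub: "e \<in> hs_edges S \<Longrightarrow> e \<subseteq> hs_vertices S"
  using edge_sub by (fastforce simp: hs_edges_def hs_vertices_def)

lemma hexe_hs: "h \<in> S \<Longrightarrow> hex_edges h \<subseteq> hs_edges S"
  by (auto simp: hs_edges_def)

lemma hexv_hs: "h \<in> S \<Longrightarrow> hex_vertices h \<subseteq> hs_vertices S"
  by (auto simp: hs_vertices_def)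

lemma pm_disj:
  assumes "perfect_matching S M" "e \<in> M" "e' \<in> M" "e \<noteq> e'"
  shows "e \<inter> e' = {}"
proof (rule ccontr)
  assume "e \<inter> e' \<noteq> {}"
  then obtain v where v: "v \<in> e" "v \<in> e'" by blast
  have "v \<in> hs_vertices S" using assms(1,2) v hs_edge_sub by (auto simp: perfect_matching_def)
  then show False using assms v by (auto simp: perfect_matching_def)
qed

lemma hexv_disj_e: "hex_vertices a \<inter> hex_vertices b = {} \<Longrightarrow> hex_edges a \<inter> hex_edges b = {}"
  using edge_sub edge_ne by blast

lemma alt_of_adj:
  assumes "perfect_matching S M" "perfect_matching S M'" "sd M M' = hex_edges h"
  shows "alternating M h"
  unfolding alternating_def
proof (intro ballI impI)
  fix e e' assume ee: "e \<in> hex_edges h" "e' \<in> hex_edges h" "e \<noteq> e' \<and> e \<inter> e' \<noteq> {}"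
  have "e \<in> M \<longleftrightarrow> e \<notin> M'" "e' \<in> M \<longleftrightarrow> e' \<notin> M'" using ee assms(3) by (auto simp: sd_def)
  moreover have "\<not> (e \<in> M \<and> e' \<in> M)" using pm_disj[OF assms(1)] ee by blast
  moreover have "\<not> (e \<in> M' \<and> e' \<in> M')" using pm_disj[OF assms(2)] ee by blast
  ultimately show "e \<in> M \<longleftrightarrow> e' \<notin> M" by blast
qed

lemma alt_cover:
  assumes "alternating M h" "v \<in> hex_vertices h"
  shows "\<exists>e\<in>M \<inter> hex_edges h. v \<in> e"
  using alt_cases[OF assms(1)] ev_cover[OF assms(2)] od_cover[OF assms(2)] by auto

lemma par_contra:
  assumes "A = ev h \<or> A = od h" "sd A {e} = ev h \<or> sd A {e} = od h"
  shows False
proof -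
  have c: "card A = 3" "card (sd A {e}) = 3" using assms card_ev card_od by metis+
  have fA: "finite A" using c by (metis card.infinite zero_neq_numeral)
  show False
  proof (cases "e \<in> A")
    case True
    then have "sd A {e} = A - {e}" by (auto simp: sd_def)
    then show False using c True fA by simp
  next
    case False
    then have "sd A {e} = insert e A" by (auto simp: sd_def)
    then show False using c False fA by simp
  qed
qed

lemma key:
  assumes "sd (hex_edges a) (hex_edges x) = sd (hex_edges b) (hex_edges y)" "a \<noteq> x" "a \<noteq> b"
  shows "x = b"
proof -
  have y: "y = a"
  proof (rule ccontr)
    assume ya: "y \<noteq> a"
    have sub: "hex_edges a - hex_edges x \<subseteq> (hex_edges a \<inter> hex_edges b) \<union> (hex_edges a \<inter> hex_edges y)"
      using assms(1) by (auto simp: sd_def set_eq_iff)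
    have "card (hex_edges a - hex_edges x) \<le> card ((hex_edges a \<inter> hex_edges b) \<union> (hex_edges a \<inter> hex_edges y))"
      by (rule card_mono[OF _ sub]) simp
    also have "\<dots> \<le> card (hex_edges a \<inter> hex_edges b) + card (hex_edges a \<inter> hex_edges y)"
      by (rule card_Un_le)
    also have "\<dots> \<le> 2" using hexe_inter[OF assms(3)] hexe_inter[of a y] ya by fastforce
    finally have 1: "card (hex_edges a - hex_edges x) \<le> 2" .
    have "card (hex_edges a - hex_edges x) = card (hex_edges a) - card (hex_edges a \<inter> hex_edges x)"
      by (metis Diff_Int2 Diff_Int_distrib2 card_Diff_subset_Int finite_Int finite_hexe inf.idem inf_le1 card_Diff_subset)
    moreover have "card (hex_edges a \<inter> hex_edges x) \<le> 1" using hexe_inter[OF assms(2)] .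
    ultimately show False using 1 card_hexe[of a] by linarith
  qed
  have "hex_edges x = hex_edges b" using assms(1) unfolding y
    by (metis sd_cancel sd_comm sd_assoc)
  then show ?thesis by (rule hexe_inj)
qed

definition U :: "cell set \<Rightarrow> hedge set" where "U D = (\<Union>h\<in>D. hex_edges h)"

lemma U_empty: "U D = {} \<Longrightarrow> D = {}"
  using hexe_ne by (auto simp: U_def)

locale cc =
  fixes S K F assumes clar: "clar_cover S K F"
begin

lemma KS: "K \<subseteq> S" using clar by (simp add: clar_cover_def)
lemma FE: "F \<subseteq> hs_edges S" using clar by (simp add: clar_cover_def)
lemma Kdisj: "h \<in> K \<Longrightarrow> h' \<in> K \<Longrightarrow> h \<noteq> h' \<Longrightarrow> hex_vertices h \<inter> hex_vertices h' = {}"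
  using clar by (simp add: clar_cover_def)
lemma Fdisj: "e \<in> F \<Longrightarrow> e' \<in> F \<Longrightarrow> e \<noteq> e' \<Longrightarrow> e \<inter> e' = {}"
  using clar by (simp add: clar_cover_def)
lemma FK: "e \<in> F \<Longrightarrow> h \<in> K \<Longrightarrow> e \<inter> hex_vertices h = {}"
  using clar by (simp add: clar_cover_def)
lemma cover: "(\<Union>h\<in>K. hex_vertices h) \<union> \<Union>F = hs_vertices S"
  using clar by (simp add: clar_cover_def)

lemma KE: "h \<in> K \<Longrightarrow> h' \<in> K \<Longrightarrow> h \<noteq> h' \<Longrightarrow> hex_edges h \<inter> hex_edges h' = {}"
  using Kdisj hexv_disj_e by blast

lemma FnE: "e \<in> F \<Longrightarrow> h \<in> K \<Longrightarrow> e \<notin> hex_edges h"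
proof
  assume a: "e \<in> F" "h \<in> K" "e \<in> hex_edges h"
  show False using FK[OF a(1,2)] edge_sub[OF a(3)] edge_ne[OF a(3)] by blast
qed

definition part :: "cell set \<Rightarrow> cell \<Rightarrow> hedge set" where
  "part B h = (if h \<in> B then od h else ev h)"

definition sel :: "cell set \<Rightarrow> hedge set" where
  "sel B = F \<union> (\<Union>h\<in>K. part B h)"

lemma part_sub: "part B h \<subseteq> hex_edges h"
  using ev_od_un[of h] by (auto simp: part_def)

lemma sel_int: "h \<in> K \<Longrightarrow> sel B \<inter> hex_edges h = part B h"
proof -
  assume h: "h \<in> K"
  have "F \<inter> hex_edges h = {}" using FnE h by blast
  moreover have "part B h' \<inter> hex_edges h = {}" if "h' \<in> K" "h' \<noteq> h" for h'
    using KE[OF that(1) h that(2)] part_sub[of B h'] by blast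
  ultimately show ?thesis using part_sub[of B h] h unfolding sel_def by blast
qed

lemma sel_disj:
  assumes "e \<in> sel B" "e' \<in> sel B" "e \<noteq> e'"
  shows "e \<inter> e' = {}"
proof -
  have pv: "x \<subseteq> hex_vertices h" if "x \<in> part B h" for x h
    using that part_sub edge_sub by blast
  consider (FF) "e \<in> F" "e' \<in> F" | (FP) h' where "e \<in> F" "h' \<in> K" "e' \<in> part B h'"
    | (PF) h where "h \<in> K" "e \<in> part B h" "e' \<in> F"
    | (PP) h h' where "h \<in> K" "e \<in> part B h" "h' \<in> K" "e' \<in> part B h'"
    using assms(1,2) unfolding sel_def by blast
  then show ?thesis
  proof cases
    case FF then show ?thesis using Fdisj assms(3) by blast
  next
    case FP then show ?thesis using FK[of e h'] pv[of e' h'] by blast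
  next
    case PF then show ?thesis using FK[of e' h] pv[of e h] by blast
  next
    case PP
    show ?thesis
    proof (cases "h = h'")
      case True
      then show ?thesis using PP ev_disj od_disj assms(3) unfolding part_def
        by (cases "h \<in> B") auto
    next
      case False
      then show ?thesis using Kdisj[OF PP(1,3) False] pv[OF PP(2)] pv[OF PP(4)] by blast
    qed
  qed
qed

lemma sel_pm: "perfect_matching S (sel B)"
  unfolding perfect_matching_def
proof (intro conjI ballI)
  show "sel B \<subseteq> hs_edges S"
    using FE KS part_sub hexe_hs unfolding sel_def by blast
next
  fix v assume v: "v \<in> hs_vertices S"
  have "\<exists>e. e \<in> sel B \<and> v \<in> e"
  proof -
    from v cover consider (H) h where "h \<in> K" "v \<in> hex_vertices h" | (F) f where "f \<in> F" "v \<in> f"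
      by blast
    then show ?thesis
    proof cases
      case H
      then obtain e where "e \<in> part B h" "v \<in> e"
        using ev_cover[OF H(2)] od_cover[OF H(2)] unfolding part_def by (cases "h \<in> B") auto
      then show ?thesis using H unfolding sel_def by blast
    next
      case F then show ?thesis unfolding sel_def by blast
    qed
  qed
  then show "\<exists>!e. e \<in> sel B \<and> v \<in> e" using sel_disj by blast
qed

lemma sel_f: "sel B \<in> f_set S K F"
  unfolding f_set_def
proof (intro CollectI conjI ballI)
  show "perfect_matching S (sel B)" by (rule sel_pm)
  fix h assume "h \<in> K"
  then show "alternating (sel B) h" using sel_int alt_intro unfolding part_def by (cases "h \<in> B") auto
next
  show "F \<subseteq> sel B" unfolding sel_def by blast
qed

lemma fset_alt: "M \<in> f_set S K F \<Longrightarrow> h \<in> K \<Longrightarrow> M \<inter> hex_edges h = ev h \<or> M \<inter> hex_edges h = od h"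
  using alt_cases by (auto simp: f_set_def)

lemma fset_out:
  assumes M: "M \<in> f_set S K F" and e: "e \<in> M" and out: "\<forall>h\<in>K. e \<notin> hex_edges h"
  shows "e \<in> F"
proof -
  have pm: "perfect_matching S M" and alt: "\<forall>h\<in>K. alternating M h" and FM: "F \<subseteq> M"
    using M by (auto simp: f_set_def)
  have "e \<in> hs_edges S" using pm e by (auto simp: perfect_matching_def)
  then obtain h0 where "h0 \<in> S" "e \<in> hex_edges h0" by (auto simp: hs_edges_def)
  then obtain v where v: "v \<in> e" using edge_ne by blast
  have "v \<in> hs_vertices S" using \<open>e \<in> hs_edges S\<close> hs_edge_sub v by blast
  with cover consider (H) h where "h \<in> K" "v \<in> hex_vertices h" | (F) f where "f \<in> F" "v \<in> f"
    by blast
  then show ?thesis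
  proof cases
    case H
    then obtain e' where "e' \<in> M \<inter> hex_edges h" "v \<in> e'" using alt_cover alt by blast
    moreover have "e' \<noteq> e" using out H calculation by blast
    ultimately show ?thesis using pm_disj[OF pm e] v by blast
  next
    case F
    then have "f \<in> M" using FM by blast
    then have "f = e" using pm_disj[OF pm e] v F by blast
    then show ?thesis using F by simp
  qed
qed

lemma fset_sel:
  assumes M: "M \<in> f_set S K F"
  shows "M = sel {h\<in>K. M \<inter> hex_edges h = od h}" (is "M = sel ?B")
proof
  show "M \<subseteq> sel ?B"
  proof
    fix e assume e: "e \<in> M"
    show "e \<in> sel ?B"
    proof (cases "\<exists>h\<in>K. e \<in> hex_edges h")
      case True
      then obtain h where h: "h \<in> K" "e \<in> hex_edges h" by blast
      have "M \<inter> hex_edges h = part ?B h" using fset_alt[OF M h(1)] h(1) unfolding part_def by auto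
      then show ?thesis using e h unfolding sel_def by blast
    next
      case False
      then show ?thesis using fset_out[OF M e] unfolding sel_def by blast
    qed
  qed
next
  show "sel ?B \<subseteq> M"
  proof
    fix e assume "e \<in> sel ?B"
    then consider "e \<in> F" | h where "h \<in> K" "e \<in> part ?B h" unfolding sel_def by blast
    then show "e \<in> M"
    proof cases
      case 1 then show ?thesis using M by (auto simp: f_set_def)
    next
      case 2
      have "M \<inter> hex_edges h = part ?B h" using fset_alt[OF M 2(1)] 2(1) unfolding part_def by auto
      then show ?thesis using 2 by blast
    qed
  qed
qed

lemma fset_eq: "f_set S K F = sel ` Pow K"
proof
  show "f_set S K F \<subseteq> sel ` Pow K"
  proof
    fix M assume "M \<in> f_set S K F"
    then show "M \<in> sel ` Pow K" using fset_sel[of M] by blast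
  qed
qed (use sel_f in blast)

lemma sel_sd:
  assumes "B \<subseteq> K" "C \<subseteq> K"
  shows "sd (sel B) (sel C) = U (sd B C)"
proof (rule set_eqI)
  fix e
  show "e \<in> sd (sel B) (sel C) \<longleftrightarrow> e \<in> U (sd B C)"
  proof
    assume e: "e \<in> sd (sel B) (sel C)"
    have "e \<notin> F" using e unfolding sd_def sel_def by blast
    then obtain h where h: "h \<in> K" "e \<in> part B h \<or> e \<in> part C h"
      using e unfolding sd_def sel_def by blast
    then have eh: "e \<in> hex_edges h" using part_sub by blast
    have "e \<in> sel B \<longleftrightarrow> e \<in> part B h" "e \<in> sel C \<longleftrightarrow> e \<in> part C h"
      using sel_int[OF h(1), of B] sel_int[OF h(1), of C] eh by blast+
    then have "part B h \<noteq> part C h" using e unfolding sd_def by blast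
    then have "h \<in> sd B C" unfolding sd_def by (cases "h \<in> B"; cases "h \<in> C") (simp_all add: part_def)
    then show "e \<in> U (sd B C)" using eh unfolding U_def by blast
  next
    assume "e \<in> U (sd B C)"
    then obtain h where h: "h \<in> sd B C" "e \<in> hex_edges h" unfolding U_def by blast
    then have hK: "h \<in> K" using assms unfolding sd_def by blast
    have "e \<in> sel B \<longleftrightarrow> e \<in> part B h" "e \<in> sel C \<longleftrightarrow> e \<in> part C h"
      using sel_int[OF hK, of B] sel_int[OF hK, of C] h by blast+
    moreover have "e \<in> ev h \<longleftrightarrow> e \<notin> od h" using ev_od_un[of h] ev_od_int[of h] h(2) by blast
    ultimately show "e \<in> sd (sel B) (sel C)" using h(1) unfolding part_def sd_def by auto
  qed
qed

lemma U_single: "D \<subseteq> K \<Longrightarrow> U D = hex_edges s \<Longrightarrow> D = {s}"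
proof -
  assume D: "D \<subseteq> K" "U D = hex_edges s"
  have "D \<noteq> {}"
  proof
    assume "D = {}"
    then have "U D = {}" by (simp add: U_def)
    then show False using D(2) hexe_ne[of s] by simp
  qed
  moreover have "h = s" if "h \<in> D" for h
  proof (rule ccontr)
    assume "h \<noteq> s"
    have "hex_edges h \<subseteq> hex_edges s" using that D(2) unfolding U_def by blast
    then have "hex_edges h \<inter> hex_edges s = hex_edges h" by blast
    then show False using hexe_inter[OF \<open>h \<noteq> s\<close>] card_hexe[of h] by simp
  qed
  ultimately show "D = {s}" by blast
qed

lemma sel_inj: "B \<subseteq> K \<Longrightarrow> C \<subseteq> K \<Longrightarrow> sel B = sel C \<Longrightarrow> B = C"
  using sel_sd[of B C] U_empty[of "sd B C"] by (auto simp: sd_def)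

lemma sel_adj: "B \<subseteq> K \<Longrightarrow> C \<subseteq> K \<Longrightarrow> res_adj S (sel B) (sel C) \<longleftrightarrow> (\<exists>h. sd B C = {h})"
proof -
  assume BC: "B \<subseteq> K" "C \<subseteq> K"
  have sub: "sd B C \<subseteq> K" using BC by (auto simp: sd_def)
  show ?thesis
  proof
    assume "res_adj S (sel B) (sel C)"
    then obtain s where "U (sd B C) = hex_edges s" using sel_sd[OF BC] by (auto simp: res_adj_sd)
    then show "\<exists>h. sd B C = {h}" using U_single[OF sub] by blast
  next
    assume "\<exists>h. sd B C = {h}"
    then obtain h where h: "sd B C = {h}" by blast
    then have "h \<in> S" using sub KS by blast
    moreover have "U (sd B C) = hex_edges h" using h by (simp add: U_def)
    ultimately show "res_adj S (sel B) (sel C)" using sel_sd[OF BC] by (auto simp: res_adj_sd)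
  qed
qed

lemma K_rec: "K = {s. \<exists>M\<in>f_set S K F. \<exists>M'\<in>f_set S K F. sd M M' = hex_edges s}"
proof
  show "K \<subseteq> {s. \<exists>M\<in>f_set S K F. \<exists>M'\<in>f_set S K F. sd M M' = hex_edges s}"
  proof
    fix h assume h: "h \<in> K"
    have "sd (sel {}) (sel {h}) = hex_edges h" using sel_sd[of "{}" "{h}"] h by (simp add: U_def)
    then show "h \<in> {s. \<exists>M\<in>f_set S K F. \<exists>M'\<in>f_set S K F. sd M M' = hex_edges s}"
      using sel_f by blast
  qed
next
  show "{s. \<exists>M\<in>f_set S K F. \<exists>M'\<in>f_set S K F. sd M M' = hex_edges s} \<subseteq> K"
  proof
    fix s assume "s \<in> {s. \<exists>M\<in>f_set S K F. \<exists>M'\<in>f_set S K F. sd M M' = hex_edges s}"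
    then obtain B C where BC: "B \<subseteq> K" "C \<subseteq> K" "sd (sel B) (sel C) = hex_edges s"
      unfolding fset_eq by blast
    then have "sd B C = {s}" using sel_sd[OF BC(1,2)] U_single[of "sd B C" s] by (auto simp: sd_def)
    then show "s \<in> K" using BC by (auto simp: sd_def)
  qed
qed

lemma F_rec: "F = \<Inter> (f_set S K F)"
proof
  show "F \<subseteq> \<Inter> (f_set S K F)" by (auto simp: f_set_def)
next
  show "\<Inter> (f_set S K F) \<subseteq> F"
  proof
    fix e assume e: "e \<in> \<Inter> (f_set S K F)"
    then have e0: "e \<in> sel {}" and e1: "e \<in> sel K" using sel_f by blast+
    have "\<forall>h\<in>K. e \<notin> hex_edges h"
    proof (intro ballI notI)
      fix h assume h: "h \<in> K" "e \<in> hex_edges h"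
      have "e \<in> ev h" "e \<in> od h" using sel_int[OF h(1), of "{}"] sel_int[OF h(1), of K] e0 e1 h
        unfolding part_def by auto
      then show False using ev_od_int by blast
    qed
    then show "e \<in> F" using fset_out[OF sel_f e0] by blast
  qed
qed

end



lemma graph_iso_of_inv:
  assumes b: "bij_betw \<psi> V2 V1" and a: "\<forall>x\<in>V2. \<forall>y\<in>V2. adj2 x y \<longleftrightarrow> adj1 (\<psi> x) (\<psi> y)"
  shows "graph_iso V1 adj1 V2 adj2"
  unfolding graph_iso_def
proof (intro exI conjI ballI)
  let ?\<phi> = "inv_into V2 \<psi>"
  show "bij_betw ?\<phi> V1 V2" using b by (rule bij_betw_inv_into)
  fix x y assume xy: "x \<in> V1" "y \<in> V1"
  have im: "\<psi> ` V2 = V1" using b by (simp add: bij_betw_def)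
  have "?\<phi> x \<in> V2" "?\<phi> y \<in> V2" using xy im by (auto intro: inv_into_into)
  moreover have "\<psi> (?\<phi> x) = x" "\<psi> (?\<phi> y) = y" using xy im by (auto intro: f_inv_into_f)
  ultimately show "adj1 x y \<longleftrightarrow> adj2 (?\<phi> x) (?\<phi> y)" using a by metis
qed

lemma graph_iso_inv:
  assumes "graph_iso V1 adj1 V2 adj2"
  obtains \<psi> where "bij_betw \<psi> V2 V1" "\<forall>x\<in>V2. \<forall>y\<in>V2. adj2 x y \<longleftrightarrow> adj1 (\<psi> x) (\<psi> y)"
proof -
  obtain \<phi> where b: "bij_betw \<phi> V1 V2" and a: "\<forall>x\<in>V1. \<forall>y\<in>V1. adj1 x y \<longleftrightarrow> adj2 (\<phi> x) (\<phi> y)"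
    using assms by (auto simp: graph_iso_def)
  let ?\<psi> = "inv_into V1 \<phi>"
  have b2: "bij_betw ?\<psi> V2 V1" using b by (rule bij_betw_inv_into)
  have im: "\<phi> ` V1 = V2" using b by (simp add: bij_betw_def)
  have "\<forall>x\<in>V2. \<forall>y\<in>V2. adj2 x y \<longleftrightarrow> adj1 (?\<psi> x) (?\<psi> y)"
  proof (intro ballI)
    fix x y assume xy: "x \<in> V2" "y \<in> V2"
    have "?\<psi> x \<in> V1" "?\<psi> y \<in> V1" using xy im by (auto intro: inv_into_into)
    moreover have "\<phi> (?\<psi> x) = x" "\<phi> (?\<psi> y) = y" using xy im by (auto intro: f_inv_into_f)
    ultimately show "adj2 x y \<longleftrightarrow> adj1 (?\<psi> x) (?\<psi> y)" using a by metis
  qed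
  then show ?thesis using that b2 by blast
qed

lemma cube_adj_sd: "cube_adj A B \<longleftrightarrow> card (sd A B) = 1"
  by (simp add: cube_adj_def sd_def)

lemma sd_image: "inj_on g X \<Longrightarrow> A \<subseteq> X \<Longrightarrow> B \<subseteq> X \<Longrightarrow> sd (g ` A) (g ` B) = g ` (sd A B)"
  unfolding sd_def inj_on_def by blast

context cc
begin

lemma sel_adj_card: "B \<subseteq> K \<Longrightarrow> C \<subseteq> K \<Longrightarrow> res_adj S (sel B) (sel C) \<longleftrightarrow> card (sd B C) = 1"
  using sel_adj card_1_singleton_iff by (metis One_nat_def)

lemma forward:
  assumes fin: "finite K"
  shows "graph_iso (f_set S K F) (res_adj S) (cube_vertices (card K)) cube_adj"
proof -
  obtain g where g: "bij_betw g {..<card K} K"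
    using finite_same_card_bij[of "{..<card K}" K] fin by auto
  have inj: "inj_on g {..<card K}" using g by (simp add: bij_betw_def)
  have b1: "bij_betw (image g) (Pow {..<card K}) (Pow K)" using g by (rule bij_betw_Pow)
  have b2: "bij_betw sel (Pow K) (f_set S K F)"
    unfolding bij_betw_def fset_eq using sel_inj by (auto simp: inj_on_def)
  have b: "bij_betw (sel \<circ> image g) (Pow {..<card K}) (f_set S K F)"
    using bij_betw_trans[OF b1 b2] .
  show ?thesis
    unfolding cube_vertices_def
  proof (rule graph_iso_of_inv[OF b], intro ballI)
    fix A B assume AB: "A \<in> Pow {..<card K}" "B \<in> Pow {..<card K}"
    have sub: "g ` A \<subseteq> K" "g ` B \<subseteq> K" using AB g by (auto simp: bij_betw_def)
    have "card (sd A B) = card (g ` (sd A B))"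
      using AB by (intro card_image[symmetric] inj_on_subset[OF inj]) (auto simp: sd_def)
    also have "\<dots> = card (sd (g ` A) (g ` B))" using sd_image[OF inj] AB by simp
    finally show "cube_adj A B \<longleftrightarrow> res_adj S ((sel \<circ> image g) A) ((sel \<circ> image g) B)"
      using sel_adj_card[OF sub] by (simp add: cube_adj_sd)
  qed
qed

end



lemma sd_left_cancel: "sd P A = sd P B \<Longrightarrow> A = B"
  by (metis sd_cancel)

lemma SQ:
  assumes "Q1 = sd P (hex_edges a)" "sd Q1 R = hex_edges x" "Q2 = sd P (hex_edges b)" "sd Q2 R = hex_edges y"
    "R \<noteq> P" "a \<noteq> b"
  shows "R = sd Q1 (hex_edges b)"
proof -
  have R1: "R = sd P (sd (hex_edges a) (hex_edges x))" using assms(1,2) by (metis sd_assoc sd_eq_iff)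
  have R2: "R = sd P (sd (hex_edges b) (hex_edges y))" using assms(3,4) by (metis sd_assoc sd_eq_iff)
  have e: "sd (hex_edges a) (hex_edges x) = sd (hex_edges b) (hex_edges y)"
    using R1 R2 sd_left_cancel by metis
  have "a \<noteq> x"
  proof
    assume "a = x"
    then have "R = P" using R1 by (simp add: sd_self)
    then show False using assms(5) by simp
  qed
  then have "x = b" using key[OF e _ assms(6)] by simp
  then show ?thesis using assms(2) by (metis sd_eq_iff)
qed

locale cub =
  fixes S :: "cell set" and n :: nat and X :: "hedge set set" and \<psi> :: "nat set \<Rightarrow> hedge set"
  assumes pmX: "X \<subseteq> {M. perfect_matching S M}"
    and bij: "bij_betw \<psi> (Pow {..<n}) X"
    and adj: "\<forall>A\<in>Pow {..<n}. \<forall>B\<in>Pow {..<n}. cube_adj A B \<longleftrightarrow> res_adj S (\<psi> A) (\<psi> B)"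
begin

definition M0 where "M0 = \<psi> {}"

lemma pm: "A \<subseteq> {..<n} \<Longrightarrow> perfect_matching S (\<psi> A)"
  using bij pmX by (auto simp: bij_betw_def)

lemma inj: "A \<subseteq> {..<n} \<Longrightarrow> B \<subseteq> {..<n} \<Longrightarrow> \<psi> A = \<psi> B \<Longrightarrow> A = B"
  using bij by (auto simp: bij_betw_def inj_on_def)

lemma adjE: "A \<subseteq> {..<n} \<Longrightarrow> B \<subseteq> {..<n} \<Longrightarrow> card (sd A B) = 1 \<Longrightarrow> \<exists>s\<in>S. sd (\<psi> A) (\<psi> B) = hex_edges s"
  using adj by (auto simp: cube_adj_sd res_adj_sd)

definition hx where "hx i = (SOME s. s \<in> S \<and> sd M0 (\<psi> {i}) = hex_edges s)"

lemma hx: "i < n \<Longrightarrow> hx i \<in> S \<and> sd M0 (\<psi> {i}) = hex_edges (hx i)"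
proof -
  assume i: "i < n"
  have "card (sd {} {i}) = 1" by simp
  then have "\<exists>s. s \<in> S \<and> sd M0 (\<psi> {i}) = hex_edges s" using adjE[of "{}" "{i}"] i unfolding M0_def by auto
  then show ?thesis unfolding hx_def by (rule someI_ex)
qed

lemma psi1: "i < n \<Longrightarrow> \<psi> {i} = sd M0 (hex_edges (hx i))"
  using hx by (metis sd_eq_iff)

lemma hx_inj: "i < n \<Longrightarrow> j < n \<Longrightarrow> hx i = hx j \<Longrightarrow> i = j"
  using psi1 inj[of "{i}" "{j}"] by auto

lemma alt0: "i < n \<Longrightarrow> alternating M0 (hx i)"
  using alt_of_adj[OF pm pm, of "{}" "{i}"] hx unfolding M0_def by auto

lemma DJ:
  assumes ij: "i < n" "j < n" "i \<noteq> j"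
  shows "hex_vertices (hx i) \<inter> hex_vertices (hx j) = {}"
proof (rule ccontr)
  assume ne: "hex_vertices (hx i) \<inter> hex_vertices (hx j) \<noteq> {}"
  have hne: "hx i \<noteq> hx j" using hx_inj ij by blast
  let ?R = "\<psi> {i,j}"
  have s1: "{i,j} \<subseteq> {..<n}" using ij by auto
  obtain x where x: "sd (\<psi> {i}) ?R = hex_edges x"
    using adjE[of "{i}" "{i,j}"] ij s1 by (auto simp: sd_def)
  obtain y where y: "sd (\<psi> {j}) ?R = hex_edges y"
    using adjE[of "{j}" "{i,j}"] ij s1 by (auto simp: sd_def insert_commute)
  have RP: "?R \<noteq> M0" using inj[OF s1, of "{}"] unfolding M0_def by auto
  have R: "?R = sd (\<psi> {i}) (hex_edges (hx j))"
    by (rule SQ[OF psi1[OF ij(1)] x psi1[OF ij(2)] y RP hne])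
  have a1: "alternating (\<psi> {i}) (hx j)"
    using alt_of_adj[OF pm[of "{i}"] pm[OF s1]] R ij by (simp add: sd_cancel)
  have a0: "alternating M0 (hx j)" using alt0 ij by simp
  obtain v where "v \<in> hex_vertices (hx i)" "v \<in> hex_vertices (hx j)" using ne by blast
  then obtain e where e: "e \<in> hex_edges (hx i)" "e \<in> hex_edges (hx j)" using share_vertex[OF hne] by blast
  have "hex_edges (hx i) \<inter> hex_edges (hx j) = {e}"
    using hexe_inter_eq[OF hne] e by blast
  then have "\<psi> {i} \<inter> hex_edges (hx j) = sd (M0 \<inter> hex_edges (hx j)) {e}"
    using psi1[OF ij(1)] by (auto simp: sd_def)
  then show False using par_contra alt_cases[OF a0] alt_cases[OF a1] by metis
qed

lemma Ehx_disj: "i < n \<Longrightarrow> B \<subseteq> {..<n} \<Longrightarrow> i \<notin> B \<Longrightarrow> hex_edges (hx i) \<inter> U (hx ` B) = {}"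
proof (rule ccontr)
  assume a: "i < n" "B \<subseteq> {..<n}" "i \<notin> B" "hex_edges (hx i) \<inter> U (hx ` B) \<noteq> {}"
  then obtain e k where ek: "e \<in> hex_edges (hx i)" "k \<in> B" "e \<in> hex_edges (hx k)" unfolding U_def by blast
  have "k < n" "k \<noteq> i" using a ek by auto
  then have "hex_edges (hx i) \<inter> hex_edges (hx k) = {}" using DJ[OF a(1)] hexv_disj_e by blast
  then show False using ek by blast
qed

lemma main: "A \<subseteq> {..<n} \<Longrightarrow> \<psi> A = sd M0 (U (hx ` A))"
proof (induction "card A" arbitrary: A rule: less_induct)
  case less
  have finA: "finite A" using less.prems finite_subset by blast
  show ?case
  proof (cases "card A \<le> 1")
    case True
    then consider "A = {}" | i where "A = {i}" using finA
      by (metis card_0_eq card_1_singleton_iff le_Suc_eq One_nat_def le_zero_eq)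
    then show ?thesis
    proof cases
      case 1 then show ?thesis by (simp add: M0_def U_def)
    next
      case 2 then show ?thesis using psi1 less.prems by (simp add: U_def)
    qed
  next
    case False
    then obtain i j where ij: "i \<in> A" "j \<in> A" "i \<noteq> j"
      by (metis One_nat_def card_le_Suc0_iff_eq finA not_less_eq_eq)
    define B where "B = A - {i,j}"
    have B: "B \<subseteq> {..<n}" "i \<notin> B" "j \<notin> B" using less.prems by (auto simp: B_def)
    have in_n: "i < n" "j < n" using ij less.prems by auto
    have A1: "A - {j} = insert i B" and A2: "A - {i} = insert j B" and A3: "A = insert i (insert j B)"
      using ij by (auto simp: B_def)
    have c1: "card (A - {j}) < card A" "card (A - {i}) < card A" "card B < card A"
      using ij finA False by (auto simp: B_def)
    have IH1: "\<psi> (A - {j}) = sd M0 (U (hx ` (A - {j})))" using less.hyps[OF c1(1)] less.prems by auto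
    have IH2: "\<psi> (A - {i}) = sd M0 (U (hx ` (A - {i})))" using less.hyps[OF c1(2)] less.prems by auto
    have IH3: "\<psi> B = sd M0 (U (hx ` B))" using less.hyps[OF c1(3)] B by auto
    have di: "hex_edges (hx i) \<inter> U (hx ` B) = {}" using Ehx_disj in_n B by blast
    have dj: "hex_edges (hx j) \<inter> U (hx ` B) = {}" using Ehx_disj in_n B by blast
    have dij: "hex_edges (hx j) \<inter> hex_edges (hx i) = {}" using DJ[of j i] in_n ij hexv_disj_e by blast
    have u1: "U (hx ` insert i B) = sd (U (hx ` B)) (hex_edges (hx i))" using di by (auto simp: U_def sd_def)
    have u2: "U (hx ` insert j B) = sd (U (hx ` B)) (hex_edges (hx j))" using dj by (auto simp: U_def sd_def)
    have Q1: "\<psi> (A - {j}) = sd (\<psi> B) (hex_edges (hx i))"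
      using IH1 IH3 u1 unfolding A1 by (simp add: sd_assoc)
    have Q2: "\<psi> (A - {i}) = sd (\<psi> B) (hex_edges (hx j))"
      using IH2 IH3 u2 unfolding A2 by (simp add: sd_assoc)
    have sA: "A - {j} \<subseteq> {..<n}" "A - {i} \<subseteq> {..<n}" using less.prems by auto
    have "sd (A - {j}) A = {j}" "sd (A - {i}) A = {i}" using ij by (auto simp: sd_def)
    then have "card (sd (A - {j}) A) = 1" "card (sd (A - {i}) A) = 1" by simp_all
    then obtain x y where x: "sd (\<psi> (A - {j})) (\<psi> A) = hex_edges x"
      and y: "sd (\<psi> (A - {i})) (\<psi> A) = hex_edges y"
      using adjE[OF sA(1) less.prems] adjE[OF sA(2) less.prems] by blast
    have RP: "\<psi> A \<noteq> \<psi> B" using inj[OF less.prems B(1)] ij unfolding B_def by auto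
    have hne: "hx i \<noteq> hx j" using hx_inj in_n ij by blast
    have "\<psi> A = sd (\<psi> (A - {j})) (hex_edges (hx j))"
      by (rule SQ[OF Q1 x Q2 y RP hne])
    also have "\<dots> = sd M0 (sd (sd (U (hx ` B)) (hex_edges (hx i))) (hex_edges (hx j)))"
      using Q1 IH3 by (simp add: sd_assoc)
    also have "sd (sd (U (hx ` B)) (hex_edges (hx i))) (hex_edges (hx j)) = U (hx ` A)"
      using di dj dij unfolding A3 by (auto simp: U_def sd_def)
    finally show ?thesis .
  qed
qed

definition KK where "KK = hx ` {..<n}"
definition FF where "FF = M0 - U KK"

lemma M0pm: "perfect_matching S M0" unfolding M0_def using pm by simp

lemma KK_S: "KK \<subseteq> S" using hx unfolding KK_def by auto

lemma clar: "clar_cover S KK FF"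
  unfolding clar_cover_def
proof (intro conjI ballI impI)
  show "KK \<subseteq> S" by (rule KK_S)
  show "FF \<subseteq> hs_edges S" using M0pm unfolding FF_def perfect_matching_def by blast
next
  fix h h' assume "h \<in> KK" "h' \<in> KK" "h \<noteq> h'"
  then show "hex_vertices h \<inter> hex_vertices h' = {}" using DJ unfolding KK_def by auto
next
  fix e e' assume "e \<in> FF" "e' \<in> FF" "e \<noteq> e'"
  then show "e \<inter> e' = {}" using pm_disj[OF M0pm] unfolding FF_def by blast
next
  fix e h assume e: "e \<in> FF" and h: "h \<in> KK"
  show "e \<inter> hex_vertices h = {}"
  proof (rule ccontr)
    assume "e \<inter> hex_vertices h \<noteq> {}"
    then obtain v where v: "v \<in> e" "v \<in> hex_vertices h" by blast
    obtain i where i: "i < n" "h = hx i" using h unfolding KK_def by blast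
    obtain e' where e': "e' \<in> M0 \<inter> hex_edges h" "v \<in> e'" using alt_cover[OF alt0[OF i(1)]] v i by blast
    have "e \<notin> hex_edges h" using e h unfolding FF_def U_def by blast
    then have "e \<noteq> e'" using e' by blast
    then show False using pm_disj[OF M0pm, of e e'] e e' v unfolding FF_def by blast
  qed
next
  show "(\<Union>h\<in>KK. hex_vertices h) \<union> \<Union>FF = hs_vertices S"
  proof
    show "(\<Union>h\<in>KK. hex_vertices h) \<union> \<Union>FF \<subseteq> hs_vertices S"
      using KK_S hexv_hs M0pm hs_edge_sub unfolding FF_def perfect_matching_def by blast
  next
    show "hs_vertices S \<subseteq> (\<Union>h\<in>KK. hex_vertices h) \<union> \<Union>FF"
    proof
      fix v assume "v \<in> hs_vertices S"
      then obtain e where e: "e \<in> M0" "v \<in> e" using M0pm unfolding perfect_matching_def by blast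
      show "v \<in> (\<Union>h\<in>KK. hex_vertices h) \<union> \<Union>FF"
      proof (cases "e \<in> U KK")
        case True
        then obtain h where "h \<in> KK" "e \<in> hex_edges h" unfolding U_def by blast
        then show ?thesis using edge_sub e by blast
      next
        case False
        then show ?thesis using e unfolding FF_def by blast
      qed
    qed
  qed
qed

lemma card_KK: "card KK = n"
  unfolding KK_def using hx_inj by (subst card_image) (auto simp: inj_on_def)

lemma fset: "f_set S KK FF = X"
proof -
  interpret c: cc S KK FF by (unfold_locales) (rule clar)
  have M0f: "M0 \<in> f_set S KK FF"
    unfolding f_set_def using M0pm alt0 unfolding KK_def FF_def by auto
  then obtain C0 where C0: "C0 \<subseteq> KK" "M0 = c.sel C0" using c.fset_eq by auto
  show ?thesis
  proof
    show "X \<subseteq> f_set S KK FF"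
    proof
      fix M assume "M \<in> X"
      then obtain A where A: "A \<subseteq> {..<n}" "M = \<psi> A" using bij by (auto simp: bij_betw_def)
      let ?D = "hx ` A"
      have D: "?D \<subseteq> KK" using A unfolding KK_def by auto
      have sub: "sd C0 ?D \<subseteq> KK" using D C0 by (auto simp: sd_def)
      have "sd (c.sel C0) (c.sel (sd C0 ?D)) = U ?D"
        using c.sel_sd[OF C0(1) sub] by (simp add: sd_cancel)
      then have "c.sel (sd C0 ?D) = M" using A main C0 by (metis sd_eq_iff)
      then show "M \<in> f_set S KK FF" using c.sel_f by metis
    qed
  next
    show "f_set S KK FF \<subseteq> X"
    proof
      fix M assume "M \<in> f_set S KK FF"
      then obtain C where C: "C \<subseteq> KK" "M = c.sel C" using c.fset_eq by auto
      let ?D = "sd C0 C"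
      have D: "?D \<subseteq> KK" using C C0 by (auto simp: sd_def)
      define A where "A = {i\<in>{..<n}. hx i \<in> ?D}"
      have DA: "?D = hx ` A" using D unfolding A_def KK_def by auto
      have A: "A \<subseteq> {..<n}" unfolding A_def by auto
      have "sd M0 M = U (hx ` A)" using c.sel_sd[OF C0(1) C(1)] C0 C DA by simp
      then have "M = \<psi> A" using main[OF A] by (metis sd_eq_iff)
      then show "M \<in> X" using A bij by (auto simp: bij_betw_def)
    qed
  qed
qed

end

theorem corollary1:
  fixes S :: "cell set" and n :: nat
  assumes "hexagonal_system S" and "kekulean S"
  shows "bij_betw (\<lambda>(K, F). f_set S K F)
           {(K, F). clar_cover S K F \<and> card K = n}
           {X. X \<subseteq> {M. perfect_matching S M} \<and>
               graph_iso X (res_adj S) (cube_vertices n) cube_adj}"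
proof -
  have finS: "finite S" using assms(1) by (simp add: hexagonal_system_def)
  show ?thesis
    unfolding bij_betw_def
  proof (intro conjI)
    show "inj_on (\<lambda>(K, F). f_set S K F) {(K, F). clar_cover S K F \<and> card K = n}"
    proof (rule inj_onI)
      fix p q assume p: "p \<in> {(K, F). clar_cover S K F \<and> card K = n}"
        and q: "q \<in> {(K, F). clar_cover S K F \<and> card K = n}"
        and pq: "(\<lambda>(K, F). f_set S K F) p = (\<lambda>(K, F). f_set S K F) q"
      obtain K F where pK: "p = (K, F)" by (cases p)
      obtain K' F' where qK: "q = (K', F')" by (cases q)
      have a: "clar_cover S K F" "clar_cover S K' F'" using p q pK qK by auto
      have e: "f_set S K F = f_set S K' F'" using pq pK qK by simp
      interpret c1: cc S K F by unfold_locales (rule a(1))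
      interpret c2: cc S K' F' by unfold_locales (rule a(2))
      have "K = K'" using c1.K_rec c2.K_rec e by simp
      moreover have "F = F'" using c1.F_rec c2.F_rec e by simp
      ultimately show "p = q" using pK qK by simp
    qed
  next
    show "(\<lambda>(K, F). f_set S K F) ` {(K, F). clar_cover S K F \<and> card K = n} =
      {X. X \<subseteq> {M. perfect_matching S M} \<and> graph_iso X (res_adj S) (cube_vertices n) cube_adj}"
    proof
      show "(\<lambda>(K, F). f_set S K F) ` {(K, F). clar_cover S K F \<and> card K = n} \<subseteq>
        {X. X \<subseteq> {M. perfect_matching S M} \<and> graph_iso X (res_adj S) (cube_vertices n) cube_adj}"
      proof clarify
        fix K F assume a: "clar_cover S K F" "n = card K"
        interpret c: cc S K F by unfold_locales (rule a(1))
        have "finite K" using c.KS finS finite_subset by blast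
        then have "graph_iso (f_set S K F) (res_adj S) (cube_vertices (card K)) cube_adj"
          by (rule c.forward)
        moreover have "f_set S K F \<subseteq> {M. perfect_matching S M}" by (auto simp: f_set_def)
        ultimately show "f_set S K F \<subseteq> {M. perfect_matching S M} \<and>
          graph_iso (f_set S K F) (res_adj S) (cube_vertices (card K)) cube_adj" by simp
      qed
    next
      show "{X. X \<subseteq> {M. perfect_matching S M} \<and> graph_iso X (res_adj S) (cube_vertices n) cube_adj} \<subseteq>
        (\<lambda>(K, F). f_set S K F) ` {(K, F). clar_cover S K F \<and> card K = n}"
      proof
        fix X assume "X \<in> {X. X \<subseteq> {M. perfect_matching S M} \<and> graph_iso X (res_adj S) (cube_vertices n) cube_adj}"
        then have X: "X \<subseteq> {M. perfect_matching S M}" "graph_iso X (res_adj S) (cube_vertices n) cube_adj" by auto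
        obtain \<psi> where p: "bij_betw \<psi> (cube_vertices n) X"
          "\<forall>x\<in>cube_vertices n. \<forall>y\<in>cube_vertices n. cube_adj x y \<longleftrightarrow> res_adj S (\<psi> x) (\<psi> y)"
          using graph_iso_inv[OF X(2)] by blast
        interpret c: cub S n X \<psi>
          by unfold_locales (use X(1) p in \<open>auto simp: cube_vertices_def\<close>)
        have "(c.KK, c.FF) \<in> {(K, F). clar_cover S K F \<and> card K = n}" using c.clar c.card_KK by simp
        moreover have "X = f_set S c.KK c.FF" using c.fset by simp
        ultimately show "X \<in> (\<lambda>(K, F). f_set S K F) ` {(K, F). clar_cover S K F \<and> card K = n}"
          by force
      qed
    qed
  qed
qed


end
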